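(* The free semigroup of rank 1 with a zero adjoined, $\langle a,b\mid b^2=b,\ ab=ba=b\rangle$, is not isomorphic to any expanding automaton semigroup. Consequently (since the free semigroup of rank 1 is an expanding automaton semigroup), the class of expanding automaton semigroups is not closed under taking normal ideal extensions.
   Context: An expanding automaton is $(Q,\Sigma,t,o)$ with $Q$ a finite set of states, $\Sigma$ a finite alphabet, $t:Q\times\Sigma\to Q$ and $o:Q\times\Sigma\to\Sigma^+$. Each state $q$ induces $q:\Sigma^*\to\Sigma^*$ by $q(\emptyset)=\emptyset$, $q(\sigma w)=o(q,\sigma)\,q'(w)$ with $q'=t(q,\sigma)$; an expanding automaton semigroup is the semigroup of maps generated under composition by the states. For semigroups $S,T$, the normal ideal extension of $S$ by $T$ is the disjoint union $S\sqcup T$ with product $x\cdot y=xy$ if $x,y\in S$ or $x,y\in T$, $x\cdot y=y$ if $x\in S,y\in T$, and $x\cdot y=x$ if $x\in T,y\in S$. *)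

theory Defs
  imports Main "HOL-Library.FuncSet"
begin

record 'a sgrp =
  sg_carrier :: "'a set"
  sg_mult    :: "'a \<Rightarrow> 'a \<Rightarrow> 'a"

definition is_semigroup :: "'a sgrp \<Rightarrow> bool" where
  "is_semigroup S \<longleftrightarrow>
     (\<forall>x\<in>sg_carrier S. \<forall>y\<in>sg_carrier S. sg_mult S x y \<in> sg_carrier S) \<and>
     (\<forall>x\<in>sg_carrier S. \<forall>y\<in>sg_carrier S. \<forall>z\<in>sg_carrier S.
        sg_mult S (sg_mult S x y) z = sg_mult S x (sg_mult S y z))"

definition sg_isomorphic :: "'a sgrp \<Rightarrow> 'b sgrp \<Rightarrow> bool" where
  "sg_isomorphic S T \<longleftrightarrow>
     (\<exists>h. bij_betw h (sg_carrier S) (sg_carrier T) \<and>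
          (\<forall>x\<in>sg_carrier S. \<forall>y\<in>sg_carrier S.
              h (sg_mult S x y) = sg_mult T (h x) (h y)))"

definition expanding_automaton ::
  "'q set \<Rightarrow> 's set \<Rightarrow> ('q \<Rightarrow> 's \<Rightarrow> 'q) \<Rightarrow> ('q \<Rightarrow> 's \<Rightarrow> 's list) \<Rightarrow> bool" where
  "expanding_automaton Q \<Sigma> t out \<longleftrightarrow>
     finite Q \<and> finite \<Sigma> \<and>
     (\<forall>q\<in>Q. \<forall>\<sigma>\<in>\<Sigma>. t q \<sigma> \<in> Q \<and> out q \<sigma> \<noteq> [] \<and> set (out q \<sigma>) \<subseteq> \<Sigma>)"

fun state_map :: "('q \<Rightarrow> 's \<Rightarrow> 'q) \<Rightarrow> ('q \<Rightarrow> 's \<Rightarrow> 's list) \<Rightarrow> 'q \<Rightarrow> 's list \<Rightarrow> 's list" where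
  "state_map t out q [] = []"
| "state_map t out q (\<sigma> # w) = out q \<sigma> @ state_map t out (t q \<sigma>) w"

definition aut_semigroup ::
  "'q set \<Rightarrow> 's set \<Rightarrow> ('q \<Rightarrow> 's \<Rightarrow> 'q) \<Rightarrow> ('q \<Rightarrow> 's \<Rightarrow> 's list) \<Rightarrow> ('s list \<Rightarrow> 's list) sgrp" where
  "aut_semigroup Q \<Sigma> t out =
     \<lparr> sg_carrier = {restrict (foldr (\<circ>) (map (state_map t out) qs) id) (lists \<Sigma>) | qs.
                       qs \<noteq> [] \<and> set qs \<subseteq> Q},
       sg_mult = (\<lambda>f g. restrict (f \<circ> g) (lists \<Sigma>)) \<rparr>"

definition is_expanding_automaton_semigroup :: "'a sgrp \<Rightarrow> 'q itself \<Rightarrow> 's itself \<Rightarrow> bool" where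
  "is_expanding_automaton_semigroup S _ _ \<longleftrightarrow>
     (\<exists>(Q::'q set) (\<Sigma>::'s set) t out.
        expanding_automaton Q \<Sigma> t out \<and> sg_isomorphic S (aut_semigroup Q \<Sigma> t out))"

definition normal_ideal_ext :: "'a sgrp \<Rightarrow> 'b sgrp \<Rightarrow> ('a + 'b) sgrp" where
  "normal_ideal_ext S T =
     \<lparr> sg_carrier = Inl ` sg_carrier S \<union> Inr ` sg_carrier T,
       sg_mult = (\<lambda>x y. case (x, y) of
                     (Inl a, Inl b) \<Rightarrow> Inl (sg_mult S a b)
                   | (Inr a, Inr b) \<Rightarrow> Inr (sg_mult T a b)
                   | (Inl a, Inr b) \<Rightarrow> Inr b
                   | (Inr a, Inl b) \<Rightarrow> Inr a) \<rparr>"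

text \<open>Free semigroup of rank 1: a^n represented by n >= 1, product a^m a^n = a^(m+n).\<close>

definition free_rank1 :: "nat sgrp" where
  "free_rank1 = \<lparr> sg_carrier = {n. 1 \<le> n}, sg_mult = (+) \<rparr>"

definition trivial_sg :: "unit sgrp" where
  "trivial_sg = \<lparr> sg_carrier = {()}, sg_mult = (\<lambda>_ _. ()) \<rparr>"

text \<open>Free semigroup of rank 1 with a zero adjoined, <a,b | b^2=b, ab=ba=b>:
  the normal ideal extension of the free semigroup of rank 1 by the trivial semigroup {b}.\<close>

definition free_rank1_with_zero :: "(nat + unit) sgrp" where
  "free_rank1_with_zero = normal_ideal_ext free_rank1 trivial_sg"

end

theory Submission
  imports Defs
begin

lemma sm_append: "state_map t out q (u @ w) = state_map t out q u @ state_map t out (foldl t q u) w"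
  by (induction u arbitrary: q) auto

lemma cmp_nil: "foldr (\<circ>) (map (state_map t out) qs) id [] = []"
  by (induction qs) auto

locale cx =
  fixes Q :: "'q set" and Sig :: "'s set" and t :: "'q \<Rightarrow> 's \<Rightarrow> 'q" and out :: "'q \<Rightarrow> 's \<Rightarrow> 's list"
    and ph :: "nat + unit \<Rightarrow> 's list \<Rightarrow> 's list"
  assumes aut: "expanding_automaton Q Sig t out"
    and bij: "bij_betw ph (sg_carrier free_rank1_with_zero) (sg_carrier (aut_semigroup Q Sig t out))"
    and hom: "\<forall>x\<in>sg_carrier free_rank1_with_zero. \<forall>y\<in>sg_carrier free_rank1_with_zero.
        ph (sg_mult free_rank1_with_zero x y) = sg_mult (aut_semigroup Q Sig t out) (ph x) (ph y)"
begin

abbreviation "L \<equiv> lists Sig"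
abbreviation "sm \<equiv> state_map t out"
definition cmp :: "'q list \<Rightarrow> 's list \<Rightarrow> 's list" where "cmp qs = foldr (\<circ>) (map sm qs) id"
definition car where "car = sg_carrier (aut_semigroup Q Sig t out)"
definition mul :: "('s list \<Rightarrow> 's list) \<Rightarrow> ('s list \<Rightarrow> 's list) \<Rightarrow> 's list \<Rightarrow> 's list"
  where "mul X Y = restrict (X \<circ> Y) L"
definition P where "P n = ph (Inl n)"
definition Z where "Z = ph (Inr ())"

lemma car_def2: "car = {restrict (cmp qs) L | qs. qs \<noteq> [] \<and> set qs \<subseteq> Q}"
  by (simp add: car_def aut_semigroup_def cmp_def)

lemma smult: "sg_mult (aut_semigroup Q Sig t out) = mul"
  by (simp add: aut_semigroup_def mul_def fun_eq_iff)

lemma cmp_simps: "cmp [] = id" "cmp (q#qs) = sm q \<circ> cmp qs"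
  by (simp_all add: cmp_def)

lemma autQ: "finite Q" "finite Sig" "q \<in> Q \<Longrightarrow> \<sigma> \<in> Sig \<Longrightarrow> t q \<sigma> \<in> Q \<and> out q \<sigma> \<noteq> [] \<and> set (out q \<sigma>) \<subseteq> Sig"
  using aut by (auto simp: expanding_automaton_def)

lemma sm_closed: "q \<in> Q \<Longrightarrow> v \<in> L \<Longrightarrow> sm q v \<in> L \<and> length v \<le> length (sm q v)"
proof (induction v arbitrary: q)
  case Nil then show ?case by simp
next
  case (Cons \<sigma> v)
  then have s: "\<sigma> \<in> Sig" "v \<in> L" by auto
  with Cons.prems autQ(3)[of q \<sigma>] have h: "t q \<sigma> \<in> Q" "out q \<sigma> \<noteq> []" "set (out q \<sigma>) \<subseteq> Sig" by auto
  have "length (out q \<sigma>) \<ge> 1" using h(2) by (cases "out q \<sigma>") auto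
  with Cons.IH[of "t q \<sigma>"] s h show ?case by auto
qed

lemma reach_in: "q \<in> Q \<Longrightarrow> u \<in> L \<Longrightarrow> foldl t q u \<in> Q"
  by (induction u arbitrary: q) (auto simp: autQ(3))

lemma cmp_closed: "set qs \<subseteq> Q \<Longrightarrow> v \<in> L \<Longrightarrow> cmp qs v \<in> L \<and> length v \<le> length (cmp qs v)"
proof (induction qs)
  case Nil then show ?case by (simp add: cmp_simps)
next
  case (Cons q qs)
  then have "cmp qs v \<in> L \<and> length v \<le> length (cmp qs v)" by auto
  moreover have "q \<in> Q" using Cons.prems by auto
  ultimately show ?case using sm_closed[of q "cmp qs v"] by (auto simp: cmp_simps)
qed

lemma cmp_append: "set qs \<subseteq> Q \<Longrightarrow> u \<in> L \<Longrightarrow>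
  \<exists>rs. length rs = length qs \<and> set rs \<subseteq> Q \<and> (\<forall>w. cmp qs (u@w) = cmp qs u @ cmp rs w)"
proof (induction qs)
  case Nil then show ?case by (auto simp: cmp_simps)
next
  case (Cons q qs)
  then obtain rs where rs: "length rs = length qs" "set rs \<subseteq> Q" "\<forall>w. cmp qs (u@w) = cmp qs u @ cmp rs w" by auto
  have v: "cmp qs u \<in> L" using cmp_closed Cons.prems by auto
  have q: "q \<in> Q" using Cons.prems by auto
  show ?case
  proof (intro exI conjI)
    show "length (foldl t q (cmp qs u) # rs) = length (q # qs)" using rs by simp
    show "set (foldl t q (cmp qs u) # rs) \<subseteq> Q" using rs reach_in[OF q v] by auto
    show "\<forall>w. cmp (q # qs) (u @ w) = cmp (q # qs) u @ cmp (foldl t q (cmp qs u) # rs) w"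
      using rs(3) by (simp add: cmp_simps sm_append)
  qed
qed

lemma car_props: assumes "X \<in> car" "v \<in> L" shows "X v \<in> L \<and> length v \<le> length (X v)"
proof -
  obtain qs where qs: "X = restrict (cmp qs) L" "qs \<noteq> []" "set qs \<subseteq> Q" using assms(1) by (auto simp: car_def2)
  show ?thesis using cmp_closed[OF qs(3) assms(2)] qs(1) assms(2) by simp
qed

lemma car_ext: "X \<in> car \<Longrightarrow> X \<in> extensional L"
  by (auto simp: car_def2)

lemma car_nil: "X \<in> car \<Longrightarrow> X [] = []"
  by (auto simp: car_def2 cmp_def cmp_nil)

lemma ext_eq: "X \<in> car \<Longrightarrow> Y \<in> car \<Longrightarrow> (\<forall>v\<in>L. X v = Y v) \<Longrightarrow> X = Y"
  by (metis car_ext extensionalityI)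

lemma residual: assumes "X \<in> car" "u \<in> L" shows "\<exists>R\<in>car. \<forall>w\<in>L. X (u@w) = X u @ R w"
proof -
  obtain qs where qs: "X = restrict (cmp qs) L" "qs \<noteq> []" "set qs \<subseteq> Q" using assms(1) by (auto simp: car_def2)
  obtain rs where rs: "length rs = length qs" "set rs \<subseteq> Q" "\<forall>w. cmp qs (u@w) = cmp qs u @ cmp rs w"
    using cmp_append[OF qs(3) assms(2)] by auto
  have "restrict (cmp rs) L \<in> car" using rs qs(2) by (auto simp: car_def2)
  moreover have "\<forall>w\<in>L. X (u@w) = X u @ restrict (cmp rs) L w" using qs(1) rs(3) assms(2) by auto
  ultimately show ?thesis by blast
qed

lemma state_car: "q \<in> Q \<Longrightarrow> restrict (sm q) L \<in> car"
  unfolding car_def2 by (rule CollectI, rule exI[of _ "[q]"]) (simp add: cmp_simps)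

lemma mulapp: "w \<in> L \<Longrightarrow> mul X Y w = X (Y w)" by (simp add: mul_def)

lemma car0: "sg_carrier free_rank1_with_zero = Inl ` {n. 1 \<le> n} \<union> {Inr ()}"
  by (simp add: free_rank1_with_zero_def normal_ideal_ext_def free_rank1_def trivial_sg_def)

lemma mul0: "sg_mult free_rank1_with_zero (Inl a) (Inl b) = Inl (a+b)"
  "sg_mult free_rank1_with_zero (Inl a) (Inr u) = Inr ()"
  "sg_mult free_rank1_with_zero (Inr u) (Inl a) = Inr ()"
  "sg_mult free_rank1_with_zero (Inr u) (Inr u') = Inr ()"
  by (simp_all add: free_rank1_with_zero_def normal_ideal_ext_def free_rank1_def trivial_sg_def)

lemma P_car: "1 \<le> n \<Longrightarrow> P n \<in> car"
  using bij_betw_apply[OF bij] by (auto simp: P_def car_def car0)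

lemma Z_car: "Z \<in> car"
  using bij_betw_apply[OF bij] by (auto simp: Z_def car_def car0)

lemma P_mul: "1 \<le> m \<Longrightarrow> 1 \<le> n \<Longrightarrow> mul (P m) (P n) = P (m+n)"
  using hom by (auto simp: P_def car0 mul0 smult)

lemma Z_mul: assumes "X \<in> car" shows "mul Z X = Z" "mul X Z = Z"
proof -
  obtain y where y: "y \<in> sg_carrier free_rank1_with_zero" "X = ph y"
    using assms bij_betw_imp_surj_on[OF bij] by (auto simp: car_def)
  show "mul Z X = Z" "mul X Z = Z" using y hom by (auto simp: Z_def car0 mul0 smult)
qed

lemma P_inj: "1 \<le> m \<Longrightarrow> 1 \<le> n \<Longrightarrow> P m = P n \<Longrightarrow> m = n"
  using bij_betw_imp_inj_on[OF bij] unfolding inj_on_def by (auto simp: P_def car0)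

lemma P_ne_Z: "1 \<le> m \<Longrightarrow> P m \<noteq> Z"
  using bij_betw_imp_inj_on[OF bij] unfolding inj_on_def by (auto simp: P_def Z_def car0)

lemma car_cases: "X \<in> car \<Longrightarrow> X = Z \<or> (\<exists>n\<ge>1. X = P n)"
  using bij_betw_imp_surj_on[OF bij] by (auto simp: car_def car0 P_def Z_def)

lemma A_state: "\<exists>q\<in>Q. restrict (sm q) L = P 1"
proof -
  have "P 1 \<in> car" by (rule P_car) simp
  then obtain qs where qs: "P 1 = restrict (cmp qs) L" "qs \<noteq> []" "set qs \<subseteq> Q" by (auto simp: car_def2)
  then obtain q rs where qrs: "qs = q # rs" by (cases qs) auto
  show ?thesis
  proof (cases "rs = []")
    case True then show ?thesis using qs qrs by (auto simp: cmp_simps)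
  next
    case False
    let ?X = "restrict (sm q) L" and ?Y = "restrict (cmp rs) L"
    have X: "?X \<in> car" using qs qrs by (auto intro: state_car)
    have Y: "?Y \<in> car" using qs qrs False by (auto simp: car_def2)
    have e: "P 1 = mul ?X ?Y"
    proof (rule ext)
      fix v show "P 1 v = mul ?X ?Y v"
      proof (cases "v \<in> L")
        case True
        have "cmp rs v \<in> L" using cmp_closed[of rs v] True qs qrs by auto
        then show ?thesis using True unfolding qs(1) qrs by (simp add: cmp_simps mul_def)
      qed (unfold qs(1), simp add: mul_def)
    qed
    show ?thesis
    proof (cases "?X = Z \<or> ?Y = Z")
      case True
      then have "mul ?X ?Y = Z" using Z_mul X Y by auto
      then show ?thesis using e P_ne_Z[of 1] by simp
    next
      case False
      then obtain a b where ab: "a \<ge> 1" "b \<ge> 1" "?X = P a" "?Y = P b" using car_cases[OF X] car_cases[OF Y] by auto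
      then have "P 1 = P (a+b)" using e P_mul by simp
      then have "1 = a + b" using P_inj ab by simp
      then show ?thesis using ab by simp
    qed
  qed
qed

definition E where "E = {m. 1 \<le> m \<and> (\<exists>q\<in>Q. restrict (sm q) L = P m)}"
definition M where "M = Max E"

lemma E_fin: "finite E"
proof -
  have "P ` E \<subseteq> (\<lambda>q. restrict (sm q) L) ` Q"
  proof
    fix x assume "x \<in> P ` E"
    then obtain m where m: "m \<in> E" "x = P m" by auto
    then obtain q where "q \<in> Q" "restrict (sm q) L = P m" by (auto simp: E_def)
    then show "x \<in> (\<lambda>q. restrict (sm q) L) ` Q" using m by (metis image_eqI)
  qed
  hence "finite (P ` E)" using autQ(1) finite_subset by blast
  moreover have "inj_on P E" by (rule inj_onI) (auto simp: E_def intro: P_inj)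
  ultimately show ?thesis using finite_image_iff by blast
qed

lemma M_props: "M \<in> E" "1 \<le> M" "m \<in> E \<Longrightarrow> m \<le> M"
proof -
  have "1 \<in> E" using A_state by (auto simp: E_def)
  then show "M \<in> E" using E_fin unfolding M_def by (intro Max_in) auto
  then show "1 \<le> M" by (simp add: E_def)
  show "m \<in> E \<Longrightarrow> m \<le> M" using E_fin unfolding M_def by simp
qed

lemma p_ex: "\<exists>p\<in>Q. restrict (sm p) L = P M"
  using M_props(1) by (auto simp: E_def)

lemma Lres: "u \<in> L \<Longrightarrow> \<exists>R. (R = Z \<or> (\<exists>m\<ge>Suc k. R = P m)) \<and> (\<forall>w\<in>L. P (Suc k) (u@w) = P (Suc k) u @ R w)"
proof (induction k arbitrary: u)
  case 0
  obtain R where R: "R \<in> car" "\<forall>w\<in>L. P 1 (u@w) = P 1 u @ R w" using residual[OF P_car[of 1] 0] by auto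
  from car_cases[OF R(1)] R(2) show ?case by auto
next
  case (Suc k)
  obtain R where R: "R = Z \<or> (\<exists>m\<ge>Suc k. R = P m)" "\<forall>w\<in>L. P (Suc k) (u@w) = P (Suc k) u @ R w"
    using Suc.IH[OF Suc.prems] by blast
  have RC: "R \<in> car" using R(1) P_car Z_car by auto
  have v: "P (Suc k) u \<in> L" using car_props[OF P_car Suc.prems] by simp
  obtain R' where R': "R' \<in> car" "\<forall>w\<in>L. P 1 (P (Suc k) u @ w) = P 1 (P (Suc k) u) @ R' w"
    using residual[OF P_car[of 1] v] by auto
  have PS: "P (Suc (Suc k)) = mul (P 1) (P (Suc k))" using P_mul[of 1 "Suc k"] by simp
  have "\<forall>w\<in>L. P (Suc (Suc k)) (u@w) = P (Suc (Suc k)) u @ mul R' R w"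
  proof
    fix w assume w: "w \<in> L"
    have uw: "u@w \<in> L" using w Suc.prems by simp
    have Rw: "R w \<in> L" using car_props[OF RC w] by simp
    have "P (Suc (Suc k)) (u@w) = P 1 (P (Suc k) (u@w))" unfolding PS by (rule mulapp[OF uw])
    also have "\<dots> = P 1 (P (Suc k) u @ R w)" using R(2) w by simp
    also have "\<dots> = P 1 (P (Suc k) u) @ R' (R w)" using R'(2) Rw by simp
    also have "\<dots> = P (Suc (Suc k)) u @ mul R' R w" unfolding PS by (simp only: mulapp[OF Suc.prems] mulapp[OF w])
    finally show "P (Suc (Suc k)) (u@w) = P (Suc (Suc k)) u @ mul R' R w" .
  qed
  moreover have "mul R' R = Z \<or> (\<exists>m\<ge>Suc (Suc k). mul R' R = P m)"
  proof (cases "R' = Z \<or> R = Z")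
    case True then show ?thesis using Z_mul RC R'(1) by auto
  next
    case False
    then obtain a m where "a \<ge> 1" "R' = P a" "m \<ge> Suc k" "R = P m"
      using car_cases[OF R'(1)] R(1) by auto
    then have "mul R' R = P (a+m)" "a + m \<ge> Suc (Suc k)" using P_mul[of a m] by auto
    then show ?thesis by blast
  qed
  ultimately show ?case by blast
qed

lemma fres: assumes u: "u \<in> L"
  shows "(\<forall>w\<in>L. P M (u@w) = P M u @ Z w) \<or> (\<forall>w\<in>L. P M (u@w) = P M u @ P M w)"
proof -
  obtain p where p: "p \<in> Q" "restrict (sm p) L = P M" using p_ex by blast
  have PM: "P M v = sm p v" if "v \<in> L" for v
  proof -
    have "P M v = restrict (sm p) L v" using p(2) by simp
    also have "\<dots> = sm p v" using that by simp
    finally show ?thesis .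
  qed
  have MS: "Suc (M - 1) = M" using M_props(2) by simp
  obtain R where R0: "R = Z \<or> (\<exists>m\<ge>Suc (M - 1). R = P m)" "\<forall>w\<in>L. P (Suc (M - 1)) (u@w) = P (Suc (M - 1)) u @ R w"
    using Lres[OF u, of "M - 1"] by blast
  have R: "R = Z \<or> (\<exists>m\<ge>M. R = P m)" "\<forall>w\<in>L. P M (u@w) = P M u @ R w"
    using R0 unfolding MS by blast+
  let ?r = "foldl t p u"
  have r: "?r \<in> Q" using reach_in p(1) u by simp
  have Rsm: "R w = sm ?r w" if w: "w \<in> L" for w
  proof -
    have uw: "u @ w \<in> L" using u w by simp
    have "P M u @ R w = P M (u@w)" using R(2) w by simp
    also have "\<dots> = sm p (u@w)" by (rule PM[OF uw])
    also have "\<dots> = sm p u @ sm ?r w" by (rule sm_append)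
    also have "sm p u = P M u" using PM[OF u] by simp
    finally show ?thesis by simp
  qed
  show ?thesis
  proof (cases "R = Z")
    case True then show ?thesis using R(2) by simp
  next
    case False
    then obtain m where m: "m \<ge> M" "R = P m" using R(1) by blast
    have m1: "1 \<le> m" using m(1) M_props(2) by simp
    have "restrict (sm ?r) L = P m"
    proof (rule ext_eq[OF state_car[OF r] P_car[OF m1]])
      show "\<forall>v\<in>L. restrict (sm ?r) L v = P m v" using Rsm m(2) by simp
    qed
    then have "m \<in> E" using r m1 unfolding E_def by blast
    then have "m = M" using M_props(3)[OF \<open>m \<in> E\<close>] m(1) by linarith
    then show ?thesis using R(2) m by simp
  qed
qed

definition F where "F n = P (M * n)"

lemma F_car: "1 \<le> n \<Longrightarrow> F n \<in> car"
  using M_props(2) by (auto simp: F_def intro!: P_car)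

lemma F_suc: "1 \<le> n \<Longrightarrow> v \<in> L \<Longrightarrow> F (Suc n) v = P M (F n v)"
proof -
  assume n: "1 \<le> n" and v: "v \<in> L"
  have "F (Suc n) = mul (P M) (F n)" using P_mul[of M "M*n"] M_props(2) n by (simp add: F_def)
  then show ?thesis using v by (simp add: mulapp)
qed

definition ZZ where "ZZ \<sigma> n \<longleftrightarrow> (\<forall>w\<in>L. F n (\<sigma>#w) = F n [\<sigma>] @ Z w)"

lemma step_gen: assumes s: "\<sigma> \<in> Sig" and n: "1 \<le> n" and G: "G = Z \<or> G = F n"
  and H: "\<forall>w\<in>L. F n (\<sigma>#w) = F n [\<sigma>] @ G w"
  shows "ZZ \<sigma> (Suc n) \<or> (G = F n \<and> (\<forall>w\<in>L. F (Suc n) (\<sigma>#w) = F (Suc n) [\<sigma>] @ F (Suc n) w))"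
proof -
  have GC: "G \<in> car" using G Z_car F_car n by auto
  have sL: "[\<sigma>] \<in> L" using s by simp
  have u: "F n [\<sigma>] \<in> L" using car_props[OF F_car[OF n] sL] by blast
  have eq: "F (Suc n) (\<sigma>#w) = P M (F n [\<sigma>] @ G w)" if w: "w \<in> L" for w
  proof -
    have sw: "\<sigma>#w \<in> L" using s w by simp
    have "F (Suc n) (\<sigma>#w) = P M (F n (\<sigma>#w))" by (rule F_suc[OF n sw])
    also have "F n (\<sigma>#w) = F n [\<sigma>] @ G w" using H w by blast
    finally show ?thesis .
  qed
  have Fs: "F (Suc n) [\<sigma>] = P M (F n [\<sigma>])" by (rule F_suc[OF n sL])
  have Gw: "G w \<in> L" if "w \<in> L" for w using car_props[OF GC that] by blast
  have PMC: "P M \<in> car" using P_car M_props(2) by blast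
  from fres[OF u] show ?thesis
  proof
    assume A: "\<forall>w\<in>L. P M (F n [\<sigma>] @ w) = P M (F n [\<sigma>]) @ Z w"
    have "ZZ \<sigma> (Suc n)" unfolding ZZ_def
    proof
      fix w assume w: "w \<in> L"
      have ZG: "Z (G w) = Z w"
      proof -
        have "Z (G w) = mul Z G w" using mulapp[OF w] by metis
        also have "mul Z G = Z" by (rule Z_mul(1)[OF GC])
        finally show ?thesis .
      qed
      have "F (Suc n) (\<sigma>#w) = P M (F n [\<sigma>] @ G w)" by (rule eq[OF w])
      also have "\<dots> = P M (F n [\<sigma>]) @ Z (G w)" using A Gw[OF w] by blast
      also have "\<dots> = F (Suc n) [\<sigma>] @ Z w" by (simp only: Fs ZG)
      finally show "F (Suc n) (\<sigma>#w) = F (Suc n) [\<sigma>] @ Z w" .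
    qed
    then show ?thesis by blast
  next
    assume A: "\<forall>w\<in>L. P M (F n [\<sigma>] @ w) = P M (F n [\<sigma>]) @ P M w"
    have B: "F (Suc n) (\<sigma>#w) = F (Suc n) [\<sigma>] @ P M (G w)" if w: "w \<in> L" for w
    proof -
      have "F (Suc n) (\<sigma>#w) = P M (F n [\<sigma>] @ G w)" by (rule eq[OF w])
      also have "\<dots> = P M (F n [\<sigma>]) @ P M (G w)" using A Gw[OF w] by blast
      finally show ?thesis by (simp only: Fs)
    qed
    show ?thesis
    proof (cases "G = Z")
      case True
      have "ZZ \<sigma> (Suc n)" unfolding ZZ_def
      proof
        fix w assume w: "w \<in> L"
        have "P M (Z w) = mul (P M) Z w" using mulapp[OF w] by metis
        also have "mul (P M) Z = Z" by (rule Z_mul(2)[OF PMC])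
        finally have "P M (G w) = Z w" using True by simp
        then show "F (Suc n) (\<sigma>#w) = F (Suc n) [\<sigma>] @ Z w" using B[OF w] by simp
      qed
      then show ?thesis by blast
    next
      case False
      then have GF: "G = F n" using G by blast
      have "\<forall>w\<in>L. F (Suc n) (\<sigma>#w) = F (Suc n) [\<sigma>] @ F (Suc n) w"
      proof
        fix w assume w: "w \<in> L"
        have "P M (G w) = F (Suc n) w" using F_suc[OF n w] GF by simp
        then show "F (Suc n) (\<sigma>#w) = F (Suc n) [\<sigma>] @ F (Suc n) w" using B[OF w] by simp
      qed
      then show ?thesis using GF by blast
    qed
  qed
qed

lemma ZZ_suc: assumes s: "\<sigma> \<in> Sig" and n: "1 \<le> n" and z: "ZZ \<sigma> n" shows "ZZ \<sigma> (Suc n)"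
proof -
  have "Z = Z \<or> Z = F n" by simp
  from step_gen[OF s n this] z[unfolded ZZ_def]
  have h: "ZZ \<sigma> (Suc n) \<or> Z = F n" by blast
  have "1 \<le> M * n" using M_props(2) n by simp
  then have "Z \<noteq> F n" using P_ne_Z unfolding F_def by metis
  with h show ?thesis by blast
qed

lemma ZZ_mono: assumes s: "\<sigma> \<in> Sig" and n: "1 \<le> n" and z: "ZZ \<sigma> n" shows "n \<le> m \<Longrightarrow> ZZ \<sigma> m"
proof (induction m)
  case 0 then show ?case using n by simp
next
  case (Suc m)
  show ?case
  proof (cases "n = Suc m")
    case True then show ?thesis using z by simp
  next
    case False
    then have "n \<le> m" using Suc.prems by simp
    then show ?thesis using Suc.IH ZZ_suc[OF s, of m] n by simp
  qed
qed

lemma dich: "\<sigma> \<in> Sig \<Longrightarrow> 1 \<le> n \<Longrightarrow> ZZ \<sigma> n \<or> (\<forall>w\<in>L. F n (\<sigma>#w) = F n [\<sigma>] @ F n w)"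
proof (induction n)
  case 0 then show ?case by simp
next
  case (Suc n)
  show ?case
  proof (cases "n = 0")
    case True
    have F1: "F (Suc n) = P M" using True by (simp add: F_def)
    have "[\<sigma>] \<in> L" using Suc.prems by simp
    from fres[OF this] show ?thesis unfolding ZZ_def F1 by simp
  next
    case False
    then have n: "1 \<le> n" by simp
    from Suc.IH[OF Suc.prems(1) n] show ?thesis
    proof
      assume "ZZ \<sigma> n" then show ?thesis using ZZ_suc Suc.prems n by blast
    next
      assume "\<forall>w\<in>L. F n (\<sigma>#w) = F n [\<sigma>] @ F n w"
      then show ?thesis using step_gen[OF Suc.prems(1) n, of "F n"] by blast
    qed
  qed
qed

definition T where "T n = restrict (\<lambda>\<sigma>. F n [\<sigma>]) Sig"

lemma T_suc: "1 \<le> n \<Longrightarrow> T (Suc n) = restrict (\<lambda>\<sigma>. P M (T n \<sigma>)) Sig"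
  by (rule ext) (auto simp: T_def F_suc)

lemma contra: False
proof -
  define C where "C = Max ((\<lambda>\<sigma>. length (Z [\<sigma>])) ` Sig)"
  define W where "W = {xs. set xs \<subseteq> Sig \<and> length xs \<le> C}"
  have Wfin: "finite W" unfolding W_def by (rule finite_lists_length_le[OF autQ(2)])
  have Tin: "T n \<in> (\<Pi>\<^sub>E \<sigma>\<in>Sig. W)" if n: "1 \<le> n" for n
  proof -
    have "F n [\<sigma>] \<in> W" if s: "\<sigma> \<in> Sig" for \<sigma>
    proof -
      have sL: "[\<sigma>] \<in> L" using s by simp
      have FL: "F n [\<sigma>] \<in> L" "1 \<le> length (F n [\<sigma>])" using car_props[OF F_car[OF n] sL] by auto
      have "length (F n [\<sigma>]) \<le> length (Z (F n [\<sigma>]))" using car_props[OF Z_car FL(1)] by simp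
      also have "Z (F n [\<sigma>]) = Z [\<sigma>]" using Z_mul(1)[OF F_car[OF n]] mulapp[OF sL, of Z "F n"] by simp
      also have "length (Z [\<sigma>]) \<le> C" unfolding C_def using s autQ(2) by (intro Max_ge) auto
      finally show ?thesis using FL(1) by (simp add: W_def in_lists_conv_set subset_iff)
    qed
    then show ?thesis by (auto simp: T_def)
  qed
  have "finite (\<Pi>\<^sub>E \<sigma>\<in>Sig. W)" by (rule finite_PiE[OF autQ(2)]) (rule Wfin)
  moreover have "T ` {1..} \<subseteq> (\<Pi>\<^sub>E \<sigma>\<in>Sig. W)" using Tin by auto
  ultimately have "finite (T ` {1..})" by (rule finite_subset[rotated])
  moreover have "\<not> finite {1::nat..}" by (rule infinite_Ici)
  ultimately have "\<not> inj_on T {1..}" using finite_imageD[of T "{1::nat..}"] by metis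
  then obtain i j where ij0: "1 \<le> i" "1 \<le> j" "i \<noteq> j" "T i = T j" unfolding inj_on_def by auto
  obtain i0 j0 where ij: "1 \<le> i0" "i0 < j0" "T i0 = T j0"
  proof (cases "i < j")
    case True then show ?thesis using that ij0 by blast
  next
    case False then show ?thesis using that[of j i] ij0 by auto
  qed
  have Tper: "T (i0 + k) = T (j0 + k)" for k
  proof (induction k)
    case 0 then show ?case using ij by simp
  next
    case (Suc k) then show ?case using T_suc[of "i0+k"] T_suc[of "j0+k"] ij by simp
  qed
  define D where "D = j0 - i0"
  have D: "D \<ge> 1" using ij by (simp add: D_def)
  have per: "F (n + D) [\<sigma>] = F n [\<sigma>]" if "n \<ge> i0" "\<sigma> \<in> Sig" for n \<sigma>
  proof -
    obtain k where k: "n = i0 + k" using \<open>n \<ge> i0\<close> le_Suc_ex by blast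
    have e: "n + D = j0 + k" using k ij by (simp add: D_def)
    have "T (n+D) \<sigma> = T n \<sigma>" unfolding e unfolding k using Tper[of k] by simp
    then show ?thesis using that(2) by (simp add: T_def)
  qed
  define g where "g \<sigma> = (if \<exists>m. 1 \<le> m \<and> ZZ \<sigma> m then (SOME m. 1 \<le> m \<and> ZZ \<sigma> m) else 0)" for \<sigma>
  define N where "N = i0 + sum g Sig"
  have N1: "1 \<le> N" "i0 \<le> N" using ij by (auto simp: N_def)
  have claim: "ZZ \<sigma> n \<or> (\<forall>m. 1 \<le> m \<longrightarrow> \<not> ZZ \<sigma> m)" if s: "\<sigma> \<in> Sig" and n: "N \<le> n" for \<sigma> n
  proof (cases "\<exists>m. 1 \<le> m \<and> ZZ \<sigma> m")
    case True
    then have g: "1 \<le> g \<sigma> \<and> ZZ \<sigma> (g \<sigma>)" unfolding g_def by simp (rule someI_ex)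
    have "g \<sigma> \<le> sum g Sig" using s autQ(2) by (intro member_le_sum) auto
    then have "g \<sigma> \<le> n" using n by (simp add: N_def)
    then show ?thesis using ZZ_mono[OF s] g by blast
  qed simp
  have fin: "F (N + D) w = F N w" if "w \<in> L" for w
    using that
  proof (induction w)
    case Nil
    have "F (N+D) \<in> car" "F N \<in> car" using F_car N1 by auto
    then show ?case using car_nil[of "F (N+D)"] car_nil[of "F N"] by simp
  next
    case (Cons \<sigma> w)
    then have s: "\<sigma> \<in> Sig" and w: "w \<in> L" by auto
    have p: "F (N + D) [\<sigma>] = F N [\<sigma>]" using per N1 s by simp
    from claim[OF s order_refl] show ?case
    proof
      assume z: "ZZ \<sigma> N"
      then have "ZZ \<sigma> (N + D)" using ZZ_mono[OF s N1(1) z] by simp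
      then have a: "F (N+D) (\<sigma>#w) = F (N+D) [\<sigma>] @ Z w" using w unfolding ZZ_def by blast
      have b: "F N (\<sigma>#w) = F N [\<sigma>] @ Z w" using z w unfolding ZZ_def by blast
      show ?case using a b p by simp
    next
      assume nz: "\<forall>m. 1 \<le> m \<longrightarrow> \<not> ZZ \<sigma> m"
      have "\<forall>w\<in>L. F N (\<sigma>#w) = F N [\<sigma>] @ F N w" using dich[OF s N1(1)] nz N1 by blast
      moreover have "\<forall>w\<in>L. F (N+D) (\<sigma>#w) = F (N+D) [\<sigma>] @ F (N+D) w"
      proof -
        have nz2: "\<not> ZZ \<sigma> (N+D)" using nz N1(1) by simp
        have "1 \<le> N+D" using N1 by simp
        then have "ZZ \<sigma> (N+D) \<or> (\<forall>w\<in>L. F (N+D) (\<sigma>#w) = F (N+D) [\<sigma>] @ F (N+D) w)" by (rule dich[OF s])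
        with nz2 show ?thesis by blast
      qed
      ultimately have a: "F N (\<sigma>#w) = F N [\<sigma>] @ F N w" and b: "F (N+D) (\<sigma>#w) = F (N+D) [\<sigma>] @ F (N+D) w"
        using w by blast+
      show ?case using a b p Cons.IH w by simp
    qed
  qed
  have c1: "F (N+D) \<in> car" "F N \<in> car" using F_car N1 by auto
  have "F (N + D) = F N" using ext_eq[OF c1] fin by blast
  moreover have m1: "1 \<le> M * N" using M_props(2) N1(1) by simp
  moreover have m2: "1 \<le> M * (N + D)" using M_props(2) N1(1) by simp
  ultimately have "M * (N + D) = M * N" unfolding F_def using P_inj[OF m2 m1] by blast
  then show False using M_props(2) D by simp
qed

end

lemma not_iso:
  fixes Q :: "'q set" and Sig :: "'s set"
  assumes a: "expanding_automaton Q Sig t out"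
  shows "\<not> sg_isomorphic free_rank1_with_zero (aut_semigroup Q Sig t out)"
proof
  assume "sg_isomorphic free_rank1_with_zero (aut_semigroup Q Sig t out)"
  then obtain h where h: "bij_betw h (sg_carrier free_rank1_with_zero) (sg_carrier (aut_semigroup Q Sig t out))"
    "\<forall>x\<in>sg_carrier free_rank1_with_zero. \<forall>y\<in>sg_carrier free_rank1_with_zero.
        h (sg_mult free_rank1_with_zero x y) = sg_mult (aut_semigroup Q Sig t out) (h x) (h y)"
    unfolding sg_isomorphic_def by blast
  interpret cx Q Sig t out h using a h by unfold_locales
  show False by (rule contra)
qed

lemma dbl_sm: "state_map (\<lambda>q s. 0::nat) (\<lambda>q s. [0::nat,0]) q w = replicate (2 * length w) 0"
  by (induction w arbitrary: q) auto

lemma dbl_cmp: "qs \<noteq> [] \<Longrightarrow> foldr (\<circ>) (map (state_map (\<lambda>q s. 0::nat) (\<lambda>q s. [0::nat,0])) qs) id w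
   = replicate (2 ^ length qs * length w) 0"
proof (induction qs)
  case Nil then show ?case by simp
next
  case (Cons q qs)
  then show ?case by (cases "qs = []") (auto simp: dbl_sm)
qed

lemma free_aut: "is_expanding_automaton_semigroup free_rank1 TYPE(nat) TYPE(nat)"
proof -
  let ?t = "\<lambda>q s. 0::nat" and ?o = "\<lambda>q s. [0::nat,0]"
  define D where "D k = restrict (\<lambda>w. replicate (2^k * length w) (0::nat)) (lists {0::nat})" for k :: nat
  have aut: "expanding_automaton {0::nat} {0::nat} ?t ?o" by (simp add: expanding_automaton_def)
  have car: "sg_carrier (aut_semigroup {0::nat} {0::nat} ?t ?o) = D ` {k. 1 \<le> k}"
  proof
    show "sg_carrier (aut_semigroup {0::nat} {0::nat} ?t ?o) \<subseteq> D ` {k. 1 \<le> k}"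
    proof
      fix x assume "x \<in> sg_carrier (aut_semigroup {0::nat} {0::nat} ?t ?o)"
      then obtain qs :: "nat list" where qs: "x = restrict (foldr (\<circ>) (map (state_map ?t ?o) qs) id) (lists {0})" "qs \<noteq> []"
        by (auto simp: aut_semigroup_def)
      have "x = D (length qs)" unfolding qs(1) D_def dbl_cmp[OF qs(2)] by simp
      moreover have "1 \<le> length qs" using qs(2) by (cases qs) auto
      ultimately show "x \<in> D ` {k. 1 \<le> k}" by blast
    qed
  next
    show "D ` {k. 1 \<le> k} \<subseteq> sg_carrier (aut_semigroup {0::nat} {0::nat} ?t ?o)"
    proof
      fix x assume "x \<in> D ` {k. 1 \<le> k}"
      then obtain k where k: "1 \<le> k" "x = D k" by blast
      have ne: "replicate k (0::nat) \<noteq> [] \<and> set (replicate k (0::nat)) \<subseteq> {0}" using k(1) by (cases k) auto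
      have "x = restrict (foldr (\<circ>) (map (state_map ?t ?o) (replicate k 0)) id) (lists {0})"
        unfolding k(2) D_def dbl_cmp[OF ne[THEN conjunct1]] by simp
      then have "x \<in> {restrict (foldr (\<circ>) (map (state_map ?t ?o) qs) id) (lists {0}) | qs. qs \<noteq> [] \<and> set qs \<subseteq> {0}}"
        using ne by blast
      then show "x \<in> sg_carrier (aut_semigroup {0::nat} {0::nat} ?t ?o)"
        by (simp only: aut_semigroup_def sgrp.select_convs)
    qed
  qed
  have inj: "inj_on D {k. 1 \<le> k}"
  proof (rule inj_onI)
    fix m n assume "D m = D n"
    then have "D m [0] = D n [0]" by simp
    then have "replicate (2^m) (0::nat) = replicate (2^n) 0" by (simp add: D_def)
    then have "(2::nat)^m = 2^n" by (metis length_replicate)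
    then show "m = n" by simp
  qed
  have hom: "D (m + n) = restrict (D m \<circ> D n) (lists {0})" for m n
  proof (rule ext)
    fix w :: "nat list"
    show "D (m + n) w = restrict (D m \<circ> D n) (lists {0}) w"
    proof (cases "w \<in> lists {0}")
      case True
      have "D n w \<in> lists {0}" using True by (auto simp: D_def)
      then show ?thesis using True by (simp add: D_def power_add mult.assoc)
    qed (simp add: D_def)
  qed
  have "sg_isomorphic free_rank1 (aut_semigroup {0::nat} {0::nat} ?t ?o)"
    unfolding sg_isomorphic_def
  proof (intro exI conjI)
    show "bij_betw D (sg_carrier free_rank1) (sg_carrier (aut_semigroup {0::nat} {0::nat} ?t ?o))"
      unfolding car free_rank1_def bij_betw_def using inj by simp
    show "\<forall>x\<in>sg_carrier free_rank1. \<forall>y\<in>sg_carrier free_rank1.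
        D (sg_mult free_rank1 x y) = sg_mult (aut_semigroup {0::nat} {0::nat} ?t ?o) (D x) (D y)"
      by (simp add: free_rank1_def aut_semigroup_def hom)
  qed
  then show ?thesis unfolding is_expanding_automaton_semigroup_def using aut by blast
qed

lemma triv_aut: "is_expanding_automaton_semigroup trivial_sg TYPE(nat) TYPE(nat)"
proof -
  let ?t = "\<lambda>q s. 0::nat" and ?o = "\<lambda>q s. [0::nat]"
  define e where "e = restrict (\<lambda>w. [] :: nat list) (lists ({}::nat set))"
  have aut: "expanding_automaton {0::nat} ({}::nat set) ?t ?o" by (simp add: expanding_automaton_def)
  have eq: "restrict f (lists ({}::nat set)) = e" if "f [] = []" for f :: "nat list \<Rightarrow> nat list"
    using that by (auto simp: e_def fun_eq_iff)
  have car: "sg_carrier (aut_semigroup {0::nat} ({}::nat set) ?t ?o) = {e}"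
  proof
    show "sg_carrier (aut_semigroup {0::nat} ({}::nat set) ?t ?o) \<subseteq> {e}"
    proof
      fix x assume "x \<in> sg_carrier (aut_semigroup {0::nat} ({}::nat set) ?t ?o)"
      then obtain qs :: "nat list" where "x = restrict (foldr (\<circ>) (map (state_map ?t ?o) qs) id) (lists {})"
        by (auto simp: aut_semigroup_def)
      then show "x \<in> {e}" using eq[of "foldr (\<circ>) (map (state_map ?t ?o) qs) id", OF cmp_nil] by simp
    qed
    have e0: "e = restrict (foldr (\<circ>) (map (state_map ?t ?o) [0]) id) (lists ({}::nat set))"
      by (rule eq[symmetric]) simp
    have "e \<in> {restrict (foldr (\<circ>) (map (state_map ?t ?o) qs) id) (lists ({}::nat set)) | qs. qs \<noteq> [] \<and> set qs \<subseteq> {0::nat}}"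
      unfolding mem_Collect_eq by (rule exI[where x="[0::nat]"]) (simp only: e0, simp)
    then show "{e} \<subseteq> sg_carrier (aut_semigroup {0::nat} ({}::nat set) ?t ?o)"
      by (simp only: aut_semigroup_def sgrp.select_convs) blast
  qed
  have ee: "restrict (e \<circ> e) (lists ({}::nat set)) = e" by (rule eq) (simp add: e_def)
  have "sg_isomorphic trivial_sg (aut_semigroup {0::nat} ({}::nat set) ?t ?o)"
    unfolding sg_isomorphic_def
  proof (intro exI conjI)
    show "bij_betw (\<lambda>_. e) (sg_carrier trivial_sg) (sg_carrier (aut_semigroup {0::nat} ({}::nat set) ?t ?o))"
      unfolding car trivial_sg_def bij_betw_def by simp
    show "\<forall>x\<in>sg_carrier trivial_sg. \<forall>y\<in>sg_carrier trivial_sg.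
        (\<lambda>_. e) (sg_mult trivial_sg x y) = sg_mult (aut_semigroup {0::nat} ({}::nat set) ?t ?o) ((\<lambda>_. e) x) ((\<lambda>_. e) y)"
      using ee by (simp add: aut_semigroup_def)
  qed
  then show ?thesis unfolding is_expanding_automaton_semigroup_def using aut by blast
qed

theorem mainTheorem15:
  shows "(\<forall>(Q::'q set) (\<Sigma>::'s set) t out.
            expanding_automaton Q \<Sigma> t out \<longrightarrow>
            \<not> sg_isomorphic free_rank1_with_zero (aut_semigroup Q \<Sigma> t out))
       \<and> is_expanding_automaton_semigroup free_rank1 TYPE(nat) TYPE(nat)
       \<and> is_expanding_automaton_semigroup trivial_sg TYPE(nat) TYPE(nat)
       \<and> \<not> is_expanding_automaton_semigroup (normal_ideal_ext free_rank1 trivial_sg)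
             TYPE('q) TYPE('s)"
proof (intro conjI)
  show "\<forall>(Q::'q set) (\<Sigma>::'s set) t out.
            expanding_automaton Q \<Sigma> t out \<longrightarrow>
            \<not> sg_isomorphic free_rank1_with_zero (aut_semigroup Q \<Sigma> t out)"
    using not_iso by blast
  show "is_expanding_automaton_semigroup free_rank1 TYPE(nat) TYPE(nat)" by (rule free_aut)
  show "is_expanding_automaton_semigroup trivial_sg TYPE(nat) TYPE(nat)" by (rule triv_aut)
  show "\<not> is_expanding_automaton_semigroup (normal_ideal_ext free_rank1 trivial_sg) TYPE('q) TYPE('s)"
    unfolding is_expanding_automaton_semigroup_def free_rank1_with_zero_def[symmetric]
    using not_iso by blast
qed

end
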